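(* Let $n>1$, $m\ge1$, let $P$ be a pivot path of $v\in Z_{n,m}$ and let $I=[p_1+1,p_2]$ be a $P$-interval. If $I$ contains $0$ or $m+1$, assume also that no step of $P$ is a left shift at $m$ applied to a vertex whose entry $m+1$ equals $0$, and no step of $P$ is a right shift at $0$ applied to a vertex whose entry $0$ equals $0$. Then: (1) if $P$ shifts left in $I$, then $d_I(P)=\sum_{i\in I} i\,v_i$; (2) if $P$ shifts right in $I$, then $d_I(P)=\sum_{i\in I}(m+1-i)v_i$.
   Context: Elements of $\mathbb{Z}_n$ are identified with representatives in $\{0,\dots,n-1\}$ (so $v_0,v_{m+1}$ are treated as such integers in sums). $Z_{n,m}$ has vertices $u=(u_0,\dots,u_{m+1})\in\mathbb{Z}_n\times\{-1,0,1\}^m\times\mathbb{Z}_n$ with $\sum u_i\equiv0\pmod n$. A step from $v$ to $u$ is a left shift at $i$ ($0\le i\le m$) if $u_j=v_j$ for $j\notin\{i,i+1\}$, $u_i=v_i+1$, $u_{i+1}=v_{i+1}-1$, and a right shift at $i$ if $u_i=v_i-1$, $u_{i+1}=v_{i+1}+1$ (arithmetic in coordinates $0,m+1$ in $\mathbb{Z}_n$); vertices are adjacent iff related by such a shift. For a path $P$ from $v$ to the all-zero vertex $0$: $0\le p\le m$ is an inner wall if no step is a shift at $p$; $-1$ is a wall if no step is a left shift at $0$; $m+1$ is a wall if no step is a right shift at $m$. A $p$-pivot path of $v$ is a shortest path from $v$ to $0$ among those having $p$ as a wall; a pivot path is a $p$-pivot path for some $p$. If $p_1<\dots<p_t$ are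 the inner walls of $P$, $p_0=-1$, $p_{t+1}=m+1$, the $P$-intervals are $[p_k+1,p_{k+1}]$, $0\le k\le t$. For a pivot path, all steps that are shifts at some $j$ with $[j,j+1]\subseteq I$ go in the same direction; $P$ shifts left (right) in $I$ if that direction is left (right). $d_I(P)$ is the number of steps of $P$ that are shifts at some $j$ with $[j,j+1]\subseteq I$. *)

theory Defs
  imports Main
begin

text \<open>Vertices of Z_{n,m} are represented as integer lists u = [u_0, ..., u_{m+1}]
  of length m+2; the end coordinates u_0, u_{m+1} are the representatives in {0..n-1}
  of elements of Z_n, the middle coordinates lie in {-1,0,1}.\<close>

definition vertex :: "nat \<Rightarrow> nat \<Rightarrow> int list \<Rightarrow> bool" where
  "vertex n m u \<longleftrightarrow> length u = m + 2
     \<and> u ! 0 \<in> {0..<int n} \<and> u ! (m+1) \<in> {0..<int n}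
     \<and> (\<forall>i\<in>{1..m}. u ! i \<in> {-1, 0, 1})
     \<and> sum_list u mod int n = 0"

definition zero_vertex :: "nat \<Rightarrow> int list" where
  "zero_vertex m = replicate (m + 2) 0"

definition coord_add :: "nat \<Rightarrow> nat \<Rightarrow> nat \<Rightarrow> int \<Rightarrow> int \<Rightarrow> int" where
  "coord_add n m j x d = (if j = 0 \<or> j = m + 1 then (x + d) mod int n else x + d)"

definition left_shift :: "nat \<Rightarrow> nat \<Rightarrow> nat \<Rightarrow> int list \<Rightarrow> int list \<Rightarrow> bool" where
  "left_shift n m i v u \<longleftrightarrow> i \<le> m \<and> length v = m + 2 \<and>
     u = v[i := coord_add n m i (v ! i) 1, Suc i := coord_add n m (Suc i) (v ! Suc i) (-1)]"

definition right_shift :: "nat \<Rightarrow> nat \<Rightarrow> nat \<Rightarrow> int list \<Rightarrow> int list \<Rightarrow> bool" where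
  "right_shift n m i v u \<longleftrightarrow> i \<le> m \<and> length v = m + 2 \<and>
     u = v[i := coord_add n m i (v ! i) (-1), Suc i := coord_add n m (Suc i) (v ! Suc i) 1]"

definition shift_at :: "nat \<Rightarrow> nat \<Rightarrow> nat \<Rightarrow> int list \<Rightarrow> int list \<Rightarrow> bool" where
  "shift_at n m i v u \<longleftrightarrow> left_shift n m i v u \<or> right_shift n m i v u"

definition adjacent :: "nat \<Rightarrow> nat \<Rightarrow> int list \<Rightarrow> int list \<Rightarrow> bool" where
  "adjacent n m v u \<longleftrightarrow> vertex n m v \<and> vertex n m u \<and> (\<exists>i. shift_at n m i v u)"

text \<open>A path is the list of its vertices; its steps are the pairs (P!k, P!(k+1)), k < length P - 1;
  its length is the number of steps.\<close>
definition is_path :: "nat \<Rightarrow> nat \<Rightarrow> int list \<Rightarrow> int list list \<Rightarrow> bool" where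
  "is_path n m v P \<longleftrightarrow> P \<noteq> [] \<and> hd P = v \<and> last P = zero_vertex m \<and>
     (\<forall>k < length P - 1. adjacent n m (P ! k) (P ! Suc k))"

definition inner_wall :: "nat \<Rightarrow> nat \<Rightarrow> int list list \<Rightarrow> int \<Rightarrow> bool" where
  "inner_wall n m P p \<longleftrightarrow> 0 \<le> p \<and> p \<le> int m \<and>
     (\<forall>k < length P - 1. \<not> shift_at n m (nat p) (P ! k) (P ! Suc k))"

definition is_wall :: "nat \<Rightarrow> nat \<Rightarrow> int list list \<Rightarrow> int \<Rightarrow> bool" where
  "is_wall n m P p \<longleftrightarrow>
     (if p = -1 then (\<forall>k < length P - 1. \<not> left_shift n m 0 (P ! k) (P ! Suc k))
      else if p = int m + 1 then (\<forall>k < length P - 1. \<not> right_shift n m m (P ! k) (P ! Suc k))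
      else inner_wall n m P p)"

definition p_pivot_path :: "nat \<Rightarrow> nat \<Rightarrow> int \<Rightarrow> int list \<Rightarrow> int list list \<Rightarrow> bool" where
  "p_pivot_path n m p v P \<longleftrightarrow> is_path n m v P \<and> is_wall n m P p \<and>
     (\<forall>Q. is_path n m v Q \<and> is_wall n m Q p \<longrightarrow> length P \<le> length Q)"

definition pivot_path :: "nat \<Rightarrow> nat \<Rightarrow> int list \<Rightarrow> int list list \<Rightarrow> bool" where
  "pivot_path n m v P \<longleftrightarrow> (\<exists>p \<in> {-1 .. int m + 1}. p_pivot_path n m p v P)"

text \<open>[a+1, b] is a P-interval: a, b are consecutive elements of
  {-1} \<union> inner walls \<union> {m+1}.\<close>
definition P_interval :: "nat \<Rightarrow> nat \<Rightarrow> int list list \<Rightarrow> int \<Rightarrow> int \<Rightarrow> bool" where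
  "P_interval n m P a b \<longleftrightarrow>
     (let W = {-1, int m + 1} \<union> {p. inner_wall n m P p} in
       a \<in> W \<and> b \<in> W \<and> a < b \<and> (\<forall>p. a < p \<and> p < b \<longrightarrow> p \<notin> W))"

definition steps_in :: "nat \<Rightarrow> nat \<Rightarrow> int list list \<Rightarrow> int \<Rightarrow> int \<Rightarrow> nat set" where
  "steps_in n m P a b = {k. k < length P - 1 \<and>
     (\<exists>j. a + 1 \<le> int j \<and> int j + 1 \<le> b \<and> shift_at n m j (P ! k) (P ! Suc k))}"

definition d_I :: "nat \<Rightarrow> nat \<Rightarrow> int list list \<Rightarrow> int \<Rightarrow> int \<Rightarrow> nat" where
  "d_I n m P a b = card (steps_in n m P a b)"

definition shifts_left_in :: "nat \<Rightarrow> nat \<Rightarrow> int list list \<Rightarrow> int \<Rightarrow> int \<Rightarrow> bool" where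
  "shifts_left_in n m P a b \<longleftrightarrow> steps_in n m P a b \<noteq> {} \<and>
     (\<forall>k \<in> steps_in n m P a b. \<forall>j. a + 1 \<le> int j \<and> int j + 1 \<le> b \<and>
        shift_at n m j (P ! k) (P ! Suc k) \<longrightarrow> left_shift n m j (P ! k) (P ! Suc k))"

definition shifts_right_in :: "nat \<Rightarrow> nat \<Rightarrow> int list list \<Rightarrow> int \<Rightarrow> int \<Rightarrow> bool" where
  "shifts_right_in n m P a b \<longleftrightarrow> steps_in n m P a b \<noteq> {} \<and>
     (\<forall>k \<in> steps_in n m P a b. \<forall>j. a + 1 \<le> int j \<and> int j + 1 \<le> b \<and>
        shift_at n m j (P ! k) (P ! Suc k) \<longrightarrow> right_shift n m j (P ! k) (P ! Suc k))"

end

theory Submission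
  imports Defs
begin

definition phi :: "(int \<Rightarrow> int) \<Rightarrow> int \<Rightarrow> int \<Rightarrow> int list \<Rightarrow> int" where
  "phi w a b u = (\<Sum>i = a+1..b. w i * u ! nat i)"

lemma tele:
  fixes f :: "int list \<Rightarrow> int"
  assumes "P \<noteq> []" "S \<subseteq> {..<length P - 1}"
    "\<forall>k<length P - 1. f (P!k) - f (P!Suc k) = (if k \<in> S then 1 else 0)"
  shows "f (hd P) - f (last P) = int (card S)"
proof -
  have "(\<Sum>k<length P - 1. f (P!k) - f (P!Suc k)) = f (P!0) - f (P!(length P - 1))"
    by (rule sum_lessThan_telescope')
  moreover have "(\<Sum>k<length P - 1. f (P!k) - f (P!Suc k)) = (\<Sum>k<length P - 1. (if k \<in> S then 1 else 0))"
    using assms(3) by simp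
  moreover have "(\<Sum>k<length P - 1. (if k \<in> S then 1 else 0::int)) = int (card ({..<length P - 1} \<inter> S))"
    by (simp add: sum.If_cases)
  moreover have "{..<length P - 1} \<inter> S = S" using assms(2) by blast
  ultimately show ?thesis using assms(1) by (simp add: hd_conv_nth last_conv_nth)
qed

lemma sum_upd2:
  fixes u :: "int list" and w :: "int \<Rightarrow> int"
  assumes "Suc j < length u" "lo \<ge> 0" 
  shows "(\<Sum>i=lo..hi. w i * u[j:=x, Suc j:=y] ! nat i) = (\<Sum>i=lo..hi. w i * u!nat i)
     + (if lo \<le> int j \<and> int j \<le> hi then w (int j) * (x - u!j) else 0)
     + (if lo \<le> int j + 1 \<and> int j + 1 \<le> hi then w (int j + 1) * (y - u!Suc j) else 0)"
proof -
  have e: "w i * u[j:=x, Suc j:=y] ! nat i = w i * u!nat i + (if i = int j then w (int j) * (x - u!j) else 0)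
     + (if i = int j + 1 then w (int j + 1) * (y - u!Suc j) else 0)" if "i \<ge> 0" for i
    using that assms(1) by (auto simp: nth_list_update) (simp_all add: ring_distribs)
  have "(\<Sum>i=lo..hi. w i * u[j:=x, Suc j:=y] ! nat i) = (\<Sum>i=lo..hi. w i * u!nat i + (if i = int j then w (int j) * (x - u!j) else 0)
     + (if i = int j + 1 then w (int j + 1) * (y - u!Suc j) else 0))"
    using e assms(2) by (intro sum.cong) auto
  also have "\<dots> = (\<Sum>i=lo..hi. w i * u!nat i)
     + (if lo \<le> int j \<and> int j \<le> hi then w (int j) * (x - u!j) else 0)
     + (if lo \<le> int j + 1 \<and> int j + 1 \<le> hi then w (int j + 1) * (y - u!Suc j) else 0)"
    unfolding sum.distrib by (simp add: sum.delta)
  finally show ?thesis .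
qed

lemma ca_mid: "j \<noteq> 0 \<Longrightarrow> j \<noteq> m + 1 \<Longrightarrow> coord_add n m j x d = x + d"
  by (simp add: coord_add_def)

lemma left_step:
  assumes "vertex n m u" "left_shift n m j u u'" "a + 1 \<le> int j" "int j + 1 \<le> b" "a \<ge> -1"
    "j = m \<longrightarrow> u!(m+1) \<noteq> 0" "m \<ge> 1"
  shows "phi (\<lambda>i. i) a b u' = phi (\<lambda>i. i) a b u - 1"
proof -
  from assms(2) have jm: "j \<le> m" and lu: "length u = m + 2"
    and u': "u' = u[j := coord_add n m j (u ! j) 1, Suc j := coord_add n m (Suc j) (u ! Suc j) (-1)]"
    by (auto simp: left_shift_def)
  have S: "phi (\<lambda>i. i) a b u' = phi (\<lambda>i. i) a b u + int j * (coord_add n m j (u ! j) 1 - u!j)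
      + (int j + 1) * (coord_add n m (Suc j) (u ! Suc j) (-1) - u!Suc j)"
    unfolding phi_def u' using jm lu assms(3-5) by (subst sum_upd2) auto
  have c1: "coord_add n m (Suc j) (u ! Suc j) (-1) = u ! Suc j - 1"
  proof (cases "j = m")
    case True
    with assms(1,6) have "u ! Suc j \<in> {0..<int n}" "u ! Suc j \<noteq> 0" by (auto simp: vertex_def)
    then show ?thesis using True by (simp add: coord_add_def)
  next
    case False thus ?thesis using jm by (auto simp: coord_add_def)
  qed
  show ?thesis
  proof (cases "j = 0")
    case True thus ?thesis using S c1 by simp
  next
    case False
    hence "coord_add n m j (u ! j) 1 = u ! j + 1" using jm by (intro ca_mid) auto
    thus ?thesis using S c1 by (simp add: algebra_simps)
  qed
qed

lemma right_step:
  assumes "vertex n m u" "right_shift n m j u u'" "a + 1 \<le> int j" "int j + 1 \<le> b" "a \<ge> -1"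
    "j = 0 \<longrightarrow> u!0 \<noteq> 0" "m \<ge> 1"
  shows "phi (\<lambda>i. int m + 1 - i) a b u' = phi (\<lambda>i. int m + 1 - i) a b u - 1"
proof -
  from assms(2) have jm: "j \<le> m" and lu: "length u = m + 2"
    and u': "u' = u[j := coord_add n m j (u ! j) (-1), Suc j := coord_add n m (Suc j) (u ! Suc j) 1]"
    by (auto simp: right_shift_def)
  have S: "phi (\<lambda>i. int m + 1 - i) a b u' = phi (\<lambda>i. int m + 1 - i) a b u + (int m + 1 - int j) * (coord_add n m j (u ! j) (-1) - u!j)
      + (int m + 1 - (int j + 1)) * (coord_add n m (Suc j) (u ! Suc j) 1 - u!Suc j)"
    unfolding phi_def u' using jm lu assms(3-5) by (subst sum_upd2) auto
  have c0: "coord_add n m j (u ! j) (-1) = u ! j - 1"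
  proof (cases "j = 0")
    case True
    with assms(1,6) have "u ! j \<in> {0..<int n}" "u ! j \<noteq> 0" by (auto simp: vertex_def)
    then show ?thesis using True by (simp add: coord_add_def)
  next
    case False thus ?thesis using jm by (auto simp: coord_add_def)
  qed
  show ?thesis
  proof (cases "j = m")
    case True thus ?thesis using S c0 by simp
  next
    case False
    hence "coord_add n m (Suc j) (u ! Suc j) 1 = u ! Suc j + 1" using jm by (intro ca_mid) auto
    thus ?thesis using S c0 by (simp add: algebra_simps)
  qed
qed

lemma outside_step:
  assumes "shift_at n m i u u'" "\<not> (a + 1 \<le> int i \<and> int i \<le> b)"
    "\<not> (a + 1 \<le> int i + 1 \<and> int i + 1 \<le> b)" "a \<ge> -1"
  shows "phi w a b u' = phi w a b u"
proof -
  from assms(1) have "i \<le> m" "length u = m + 2"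
    "\<exists>x y. u' = u[i := x, Suc i := y]"
    by (auto simp: shift_at_def left_shift_def right_shift_def)
  then obtain x y where e: "u' = u[i := x, Suc i := y]" and "Suc i < length u" by auto
  then show ?thesis unfolding phi_def e using assms(2-4) by (subst sum_upd2) auto
qed

lemma zv: "i < m + 2 \<Longrightarrow> zero_vertex m ! i = 0"
  unfolding zero_vertex_def by (rule nth_replicate)

lemma frame:
  assumes "is_path n m v P" "P_interval n m P a b"
    "\<forall>k<length P - 1. k \<in> steps_in n m P a b \<longrightarrow> phi w a b (P!k) - phi w a b (P!Suc k) = 1"
  shows "int (d_I n m P a b) = phi w a b v"
proof -
  define W where "W = {-1, int m + 1} \<union> {p. inner_wall n m P p}"
  have aW: "a \<in> W" and bW: "b \<in> W" and ab: "a < b"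
    using assms(2) unfolding P_interval_def W_def Let_def by auto
  have Wb: "p \<in> W \<Longrightarrow> -1 \<le> p \<and> p \<le> int m + 1" for p
    unfolding W_def inner_wall_def by auto
  have am: "a \<ge> -1" "b \<le> int m + 1" using Wb aW bW by auto
  have ainner: "a \<ge> 0 \<Longrightarrow> inner_wall n m P a" using aW ab am unfolding W_def by auto
  have binner: "b \<le> int m \<Longrightarrow> inner_wall n m P b" using bW ab am unfolding W_def by auto
  have P: "P \<noteq> []" "hd P = v" "last P = zero_vertex m"
    "\<forall>k < length P - 1. adjacent n m (P ! k) (P ! Suc k)"
    using assms(1) by (auto simp: is_path_def)
  have step: "phi w a b (P!k) - phi w a b (P!Suc k) = (if k \<in> steps_in n m P a b then 1 else 0)"
    if k: "k < length P - 1" for k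
  proof (cases "k \<in> steps_in n m P a b")
    case True thus ?thesis using assms(3) k by auto
  next
    case False
    from P(4) k obtain i where sh: "shift_at n m i (P!k) (P!Suc k)" by (auto simp: adjacent_def)
    have im: "i \<le> m" using sh by (auto simp: shift_at_def left_shift_def right_shift_def)
    have ni: "\<not> (a + 1 \<le> int i \<and> int i + 1 \<le> b)" using False k sh by (auto simp: steps_in_def)
    have ia: "int i \<noteq> a"
    proof
      assume "int i = a"
      then have "inner_wall n m P a" using ainner by auto
      then show False using sh k \<open>int i = a\<close> by (auto simp: inner_wall_def)
    qed
    have ib: "int i \<noteq> b"
    proof
      assume "int i = b"
      then have "inner_wall n m P b" using binner im by auto
      then show False using sh k \<open>int i = b\<close> by (auto simp: inner_wall_def)
    qed
    have "phi w a b (P!Suc k) = phi w a b (P!k)"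
      by (rule outside_step[OF sh]) (use ni ia ib am in auto)
    then show ?thesis using False by simp
  qed
  have sub: "steps_in n m P a b \<subseteq> {..<length P - 1}" by (auto simp: steps_in_def)
  have "phi w a b (hd P) - phi w a b (last P) = int (card (steps_in n m P a b))"
    by (rule tele[OF P(1) sub]) (use step in auto)
  moreover have "phi w a b (zero_vertex m) = 0"
    unfolding phi_def using am zv by (intro sum.neutral) auto
  ultimately show ?thesis using P by (simp add: d_I_def)
qed

theorem lemma5p13:
  fixes n m :: nat and v :: "int list" and P :: "int list list" and a b :: int
  assumes "n > 1" and "m \<ge> 1"
    and "vertex n m v"
    and "pivot_path n m v P"
    and "P_interval n m P a b"
    and "(a + 1 \<le> 0 \<or> int m + 1 \<le> b) \<longrightarrow>
           (\<forall>k < length P - 1.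
              \<not> (left_shift n m m (P ! k) (P ! Suc k) \<and> (P ! k) ! (m + 1) = 0) \<and>
              \<not> (right_shift n m 0 (P ! k) (P ! Suc k) \<and> (P ! k) ! 0 = 0))"
  shows "(shifts_left_in n m P a b \<longrightarrow>
            int (d_I n m P a b) = (\<Sum>i = a + 1..b. i * v ! nat i))
       \<and> (shifts_right_in n m P a b \<longrightarrow>
            int (d_I n m P a b) = (\<Sum>i = a + 1..b. (int m + 1 - i) * v ! nat i))"
proof -
  have path: "is_path n m v P" using assms(4) by (auto simp: pivot_path_def p_pivot_path_def)
  have am: "a \<ge> -1" "b \<le> int m + 1"
    using assms(5) unfolding P_interval_def Let_def inner_wall_def by auto
  have adj: "\<And>k. k < length P - 1 \<Longrightarrow> adjacent n m (P ! k) (P ! Suc k)"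
    using path by (auto simp: is_path_def)
  show ?thesis
  proof (intro conjI impI)
    assume SL: "shifts_left_in n m P a b"
    show "int (d_I n m P a b) = (\<Sum>i = a + 1..b. i * v ! nat i)"
      unfolding phi_def[of "\<lambda>i. i", symmetric]
    proof (rule frame[OF path assms(5)], intro allI impI)
      fix k assume k: "k < length P - 1" and ks: "k \<in> steps_in n m P a b"
      then obtain j where j: "a + 1 \<le> int j" "int j + 1 \<le> b" "shift_at n m j (P ! k) (P ! Suc k)"
        by (auto simp: steps_in_def)
      have ls: "left_shift n m j (P ! k) (P ! Suc k)" using SL ks j by (auto simp: shifts_left_in_def)
      have vk: "vertex n m (P ! k)" using adj[OF k] by (auto simp: adjacent_def)
      have "j = m \<longrightarrow> (P ! k) ! (m + 1) \<noteq> 0"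
        using assms(6) j k ls by auto
      from left_step[OF vk ls j(1,2) am(1) this assms(2)]
      show "phi (\<lambda>i. i) a b (P ! k) - phi (\<lambda>i. i) a b (P ! Suc k) = 1" by simp
    qed
  next
    assume SR: "shifts_right_in n m P a b"
    show "int (d_I n m P a b) = (\<Sum>i = a + 1..b. (int m + 1 - i) * v ! nat i)"
      unfolding phi_def[of "\<lambda>i. int m + 1 - i", symmetric]
    proof (rule frame[OF path assms(5)], intro allI impI)
      fix k assume k: "k < length P - 1" and ks: "k \<in> steps_in n m P a b"
      then obtain j where j: "a + 1 \<le> int j" "int j + 1 \<le> b" "shift_at n m j (P ! k) (P ! Suc k)"
        by (auto simp: steps_in_def)
      have rs: "right_shift n m j (P ! k) (P ! Suc k)" using SR ks j by (auto simp: shifts_right_in_def)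
      have vk: "vertex n m (P ! k)" using adj[OF k] by (auto simp: adjacent_def)
      have "j = 0 \<longrightarrow> (P ! k) ! 0 \<noteq> 0"
        using assms(6) j k rs by auto
      from right_step[OF vk rs j(1,2) am(1) this assms(2)]
      show "phi (\<lambda>i. int m + 1 - i) a b (P ! k) - phi (\<lambda>i. int m + 1 - i) a b (P ! Suc k) = 1" by simp
    qed
  qed
qed

end
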